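(* Let $T$ be a reflection factorization in $G(4,2,2)$ of length $\ell\ge 3$ which contains at least one reflection from each of the conjugacy classes $S_1,S_2,S_3$. Then for any reflection $x$ in $G(4,2,2)$, there is a factorization in the Hurwitz orbit of $T$ whose right-most entry is $x$.
   Context: $G(4,2,2)$ is the group of the sixteen $2\times 2$ complex monomial matrices whose nonzero entries lie in $\{\pm1,\pm i\}$ and whose two nonzero entries multiply to $\pm 1$. A reflection is a matrix whose fixed space in $\mathbb{C}^2$ has dimension $1$. $G(4,2,2)$ contains six reflections, all of order $2$, which split into three conjugacy classes $S_1,S_2,S_3$ of $G(4,2,2)$, each of size $2$. A reflection factorization of length $\ell$ is a tuple $(r_1,\dots,r_\ell)$ of reflections in $G(4,2,2)$. The Hurwitz move $\sigma_i$ sends $(r_1,\dots,r_\ell)$ to $(r_1,\dots,r_{i-1},r_{i+1},r_{i+1}^{-1}r_ir_{i+1},r_{i+2},\dots,r_\ell)$; the Hurwitz orbit of $T$ is the set of factorizations obtained from $T$ by finite sequences of Hurwitz moves. *)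

theory Defs
  imports Complex_Main "Jordan_Normal_Form.Matrix_Kernel" "Jordan_Normal_Form.Gauss_Jordan_Elimination"
begin

definition units4 :: "complex set" where
  "units4 = {1, -1, \<i>, -\<i>}"

definition G422 :: "complex mat set" where
  "G422 = {A. A \<in> carrier_mat 2 2 \<and>
     ((A $$ (0,1) = 0 \<and> A $$ (1,0) = 0 \<and> A $$ (0,0) \<in> units4 \<and> A $$ (1,1) \<in> units4
        \<and> A $$ (0,0) * A $$ (1,1) \<in> {1, -1})
    \<or> (A $$ (0,0) = 0 \<and> A $$ (1,1) = 0 \<and> A $$ (0,1) \<in> units4 \<and> A $$ (1,0) \<in> units4
        \<and> A $$ (0,1) * A $$ (1,0) \<in> {1, -1}))}"

definition reflection422 :: "complex mat \<Rightarrow> bool" where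
  "reflection422 A \<longleftrightarrow> A \<in> G422 \<and> kernel_dim (A - 1\<^sub>m 2) = 1"

definition minv :: "complex mat \<Rightarrow> complex mat" where
  "minv A = the (mat_inverse A)"

definition conj422 :: "complex mat \<Rightarrow> complex mat \<Rightarrow> bool" where
  "conj422 a b \<longleftrightarrow> (\<exists>g\<in>G422. b = minv g * a * g)"

text \<open>Hurwitz move sigma_{i+1} (0-based index i, requires i+1 < length).\<close>
definition hurwitz_move :: "nat \<Rightarrow> complex mat list \<Rightarrow> complex mat list" where
  "hurwitz_move i T = T[i := T ! Suc i, Suc i := minv (T ! Suc i) * T ! i * T ! Suc i]"

definition hurwitz_step :: "complex mat list \<Rightarrow> complex mat list \<Rightarrow> bool" where
  "hurwitz_step T T' \<longleftrightarrow> (\<exists>i. Suc i < length T \<and> T' = hurwitz_move i T)"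

definition hurwitz_orbit :: "complex mat list \<Rightarrow> complex mat list set" where
  "hurwitz_orbit T = {T'. hurwitz_step\<^sup>*\<^sup>* T T'}"

end

theory Submission imports Defs begin

definition r00 :: "nat \<Rightarrow> complex" where "r00 k = (if k = 0 then 1 else if k = 1 then -1 else 0)"
definition r01 :: "nat \<Rightarrow> complex" where
  "r01 k = (if k \<le> 1 then 0 else if k = 2 then 1 else if k = 3 then -1 else if k = 4 then \<i> else -\<i>)"
definition r10 :: "nat \<Rightarrow> complex" where
  "r10 k = (if k \<le> 1 then 0 else if k = 2 then 1 else if k = 3 then -1 else if k = 4 then -\<i> else \<i>)"

definition rf :: "nat \<Rightarrow> complex mat" where
  "rf k = mat 2 2 (\<lambda>(i,j). if i = 0 then (if j = 0 then r00 k else r01 k) else (if j = 0 then r10 k else - r00 k))"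

lemma rf_carrier[simp]: "rf k \<in> carrier_mat 2 2"
  unfolding rf_def by simp

lemma rf_dims[simp]: "dim_row (rf k) = 2" "dim_col (rf k) = 2"
  unfolding rf_def by auto

lemma rf_ent[simp]:
  "rf k $$ (0,0) = r00 k" "rf k $$ (1,1) = - r00 k" "rf k $$ (0,1) = r01 k" "rf k $$ (1,0) = r10 k"
  unfolding rf_def by auto

lemma rf_ent'[simp]:
  "rf k $$ (Suc 0,Suc 0) = - r00 k" "rf k $$ (0,Suc 0) = r01 k" "rf k $$ (Suc 0,0) = r10 k"
  unfolding rf_def by auto

lemma mult_ent:
  assumes "A \<in> carrier_mat 2 2" "B \<in> carrier_mat 2 2"
  shows "(A * B) $$ (0,0) = A $$ (0,0) * B $$ (0,0) + A $$ (0,1) * B $$ (1,0)"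
    "(A * B) $$ (0,1) = A $$ (0,0) * B $$ (0,1) + A $$ (0,1) * B $$ (1,1)"
    "(A * B) $$ (1,0) = A $$ (1,0) * B $$ (0,0) + A $$ (1,1) * B $$ (1,0)"
    "(A * B) $$ (1,1) = A $$ (1,0) * B $$ (0,1) + A $$ (1,1) * B $$ (1,1)"
  using assms by (auto simp: scalar_prod_def numeral_2_eq_2 row_def col_def)

lemma six: "(a::nat) < 6 \<Longrightarrow> a = 0 \<or> a = 1 \<or> a = 2 \<or> a = 3 \<or> a = 4 \<or> a = 5" by auto

lemma units_sq:
  assumes "p \<in> units4" "q \<in> units4" "p * q \<in> {1, -1}"
  shows "p\<^sup>2 = q\<^sup>2" "p \<noteq> 0" "q \<noteq> 0"
  using assms unfolding units4_def by (auto simp: power2_eq_square complex_eq_iff)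

lemma class_crit:
  assumes "a < 6" "b < 6" "r00 a = r00 b \<or> r00 a = - r00 b" "(r01 a)\<^sup>2 = (r01 b)\<^sup>2"
  shows "a div 2 = b div 2"
  using six[OF assms(1)] six[OF assms(2)] assms(3,4)
  by (elim disjE) (simp_all add: r00_def r01_def power2_eq_square)

lemma r10_sq: "(r10 k)\<^sup>2 = (r01 k)\<^sup>2"
  by (simp add: r10_def r01_def power2_eq_square)

lemma conj_class:
  assumes g: "g \<in> G422" and a: "a < 6" and b: "b < 6" and eq: "g * rf b = rf a * g"
  shows "a div 2 = b div 2"
proof -
  have gc: "g \<in> carrier_mat 2 2" using g unfolding G422_def by auto
  have e: "(g * rf b) $$ (i,j) = (rf a * g) $$ (i,j)" for i j using eq by simp
  note E = e[of 0 0] e[of 0 1] e[of 1 0] e[of 1 1]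
  note E' = E[unfolded mult_ent[OF gc rf_carrier] mult_ent[OF rf_carrier gc] rf_ent]
  from g have "(g $$ (0,1) = 0 \<and> g $$ (1,0) = 0 \<and> g $$ (0,0) \<in> units4 \<and> g $$ (1,1) \<in> units4
        \<and> g $$ (0,0) * g $$ (1,1) \<in> {1, -1})
    \<or> (g $$ (0,0) = 0 \<and> g $$ (1,1) = 0 \<and> g $$ (0,1) \<in> units4 \<and> g $$ (1,0) \<in> units4
        \<and> g $$ (0,1) * g $$ (1,0) \<in> {1, -1})" unfolding G422_def by auto
  then show ?thesis
  proof (elim disjE conjE)
    assume z: "g $$ (0,1) = 0" "g $$ (1,0) = 0" and p: "g $$ (0,0) \<in> units4" and q: "g $$ (1,1) \<in> units4"
      and pq: "g $$ (0,0) * g $$ (1,1) \<in> {1, -1}"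
    note U = units_sq[OF p q pq]
    have 1: "r00 a = r00 b" using E'(1) z U(2) by simp
    have "g $$ (0,0) * r01 b = r01 a * g $$ (1,1)" using E'(2) z by simp
    then have "(g $$ (0,0))\<^sup>2 * (r01 b)\<^sup>2 = (r01 a)\<^sup>2 * (g $$ (1,1))\<^sup>2"
      by (metis power_mult_distrib)
    then have 2: "(r01 a)\<^sup>2 = (r01 b)\<^sup>2" using U by (simp add: mult.commute)
    show ?thesis using class_crit[OF a b _ 2] 1 by simp
  next
    assume z: "g $$ (0,0) = 0" "g $$ (1,1) = 0" and p: "g $$ (0,1) \<in> units4" and q: "g $$ (1,0) \<in> units4"
      and pq: "g $$ (0,1) * g $$ (1,0) \<in> {1, -1}"
    note U = units_sq[OF p q pq]
    have "g $$ (0,1) * (- r00 b) = r00 a * g $$ (0,1)" using E'(2) z by simp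
    then have 1: "r00 a = - r00 b" using U(2) by (metis minus_mult_left mult.commute mult_cancel_right)
    have "g $$ (0,1) * r10 b = r01 a * g $$ (1,0)" using E'(1) z by simp
    then have "(g $$ (0,1))\<^sup>2 * (r10 b)\<^sup>2 = (r01 a)\<^sup>2 * (g $$ (1,0))\<^sup>2"
      by (metis power_mult_distrib)
    then have 2: "(r01 a)\<^sup>2 = (r01 b)\<^sup>2" using U by (simp add: mult.commute r10_sq)
    show ?thesis using class_crit[OF a b _ 2] 1 by simp
  qed
qed

lemma mat2_eq_iff:
  assumes "A \<in> carrier_mat 2 2" "B \<in> carrier_mat 2 2"
  shows "A = B \<longleftrightarrow> A $$ (0,0) = B $$ (0,0) \<and> A $$ (0,1) = B $$ (0,1) \<and> A $$ (1,0) = B $$ (1,0) \<and> A $$ (1,1) = B $$ (1,1)"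
proof
  assume h: "A $$ (0,0) = B $$ (0,0) \<and> A $$ (0,1) = B $$ (0,1) \<and> A $$ (1,0) = B $$ (1,0) \<and> A $$ (1,1) = B $$ (1,1)"
  show "A = B"
  proof (rule eq_matI)
    fix i j assume "i < dim_row B" "j < dim_col B"
    then have "i < 2" "j < 2" using assms by auto
    then show "A $$ (i,j) = B $$ (i,j)" using h by (auto simp: less_Suc_eq numeral_2_eq_2)
  qed (use assms in auto)
qed simp

definition d2 :: "complex mat \<Rightarrow> complex" where
  "d2 A = A $$ (0,0) * A $$ (1,1) - A $$ (0,1) * A $$ (1,0)"

definition inv2 :: "complex mat \<Rightarrow> complex mat" where
  "inv2 A = mat 2 2 (\<lambda>(i,j). (if i = 0 then (if j = 0 then A $$ (1,1) else - A $$ (0,1))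
      else (if j = 0 then - A $$ (1,0) else A $$ (0,0))) / d2 A)"

lemma inv2_carrier[simp]: "inv2 A \<in> carrier_mat 2 2" unfolding inv2_def by simp

lemma inv2_ent[simp]:
  "inv2 A $$ (0,0) = A $$ (1,1) / d2 A" "inv2 A $$ (0,1) = - A $$ (0,1) / d2 A"
  "inv2 A $$ (1,0) = - A $$ (1,0) / d2 A" "inv2 A $$ (1,1) = A $$ (0,0) / d2 A"
  unfolding inv2_def by auto

lemma one2_ent[simp]:
  "(1\<^sub>m 2 :: complex mat) $$ (0,0) = 1" "(1\<^sub>m 2 :: complex mat) $$ (0,1) = 0"
  "(1\<^sub>m 2 :: complex mat) $$ (1,0) = 0" "(1\<^sub>m 2 :: complex mat) $$ (1,1) = 1"
  by auto

lemma sq_ne: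
  fixes a b c d :: complex
  assumes "a * d \<noteq> b * c"
  shows "a * (a * (d * d)) + b * (b * (c * c)) \<noteq> 2 * (a * (b * (c * d)))"
proof
  assume h: "a * (a * (d * d)) + b * (b * (c * c)) = 2 * (a * (b * (c * d)))"
  have "(a * d - b * c)\<^sup>2 = a * (a * (d * d)) + b * (b * (c * c)) - 2 * (a * (b * (c * d)))"
    by (simp add: power2_eq_square algebra_simps)
  also have "\<dots> = 0" using h by simp
  finally show False using assms by simp
qed

lemma inv2:
  assumes A: "A \<in> carrier_mat 2 2" and d: "d2 A \<noteq> 0"
  shows "A * inv2 A = 1\<^sub>m 2" "inv2 A * A = 1\<^sub>m 2"
proof -
  have c1: "A * inv2 A \<in> carrier_mat 2 2" "inv2 A * A \<in> carrier_mat 2 2"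
    using mult_carrier_mat[OF A inv2_carrier] mult_carrier_mat[OF inv2_carrier A] by auto
  show "A * inv2 A = 1\<^sub>m 2"
    unfolding mat2_eq_iff[OF c1(1) one_carrier_mat] mult_ent[OF A inv2_carrier] inv2_ent one2_ent
    using d unfolding d2_def by (simp add: field_simps, intro sq_ne, simp)
  show "inv2 A * A = 1\<^sub>m 2"
    unfolding mat2_eq_iff[OF c1(2) one_carrier_mat] mult_ent[OF inv2_carrier A] inv2_ent one2_ent
    using d unfolding d2_def by (simp add: field_simps, intro sq_ne, simp)
qed

lemma minv_eq:
  fixes A B :: "complex mat"
  assumes A: "A \<in> carrier_mat 2 2" and B: "B \<in> carrier_mat 2 2"
    and AB: "A * B = 1\<^sub>m 2" and BA: "B * A = 1\<^sub>m 2"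
  shows "minv A = B"
proof -
  have U: "A \<in> Units (ring_mat TYPE(complex) 2 undefined)"
    using A B AB BA unfolding Units_def ring_mat_def by auto
  have "mat_inverse A \<noteq> None"
    using mat_inverse(1)[OF A, of undefined] U by auto
  then obtain B' where S: "mat_inverse A = Some B'" by auto
  from mat_inverse(2)[OF A S] have B': "B' * A = 1\<^sub>m 2" "B' \<in> carrier_mat 2 2" by auto
  have "B' = B' * (A * B)" using AB B' by simp
  also have "\<dots> = (B' * A) * B" using assoc_mult_mat[OF B'(2) A B] by simp
  also have "\<dots> = B" unfolding B'(1) using B by simp
  finally show ?thesis unfolding minv_def S by simp
qed

lemma kd0:
  assumes A: "A \<in> carrier_mat 2 2" and d: "d2 A \<noteq> 0"
  shows "kernel_dim A = 0"
proof -
  have "mat_kernel (inv2 A * A) = mat_kernel A"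
    by (rule mat_kernel_mult_eq[OF A inv2_carrier A inv2(1)[OF A d]])
  then have id: "mat_kernel A = mat_kernel (1\<^sub>m 2 :: complex mat)" using inv2(2)[OF A d] by simp
  have "kernel_dim A = kernel.dim 2 A" unfolding kernel_dim_def using A by simp
  also have "\<dots> = 0" unfolding id by (rule kernel_one_mat)
  finally show ?thesis .
qed

lemma kd_id: "kernel_dim (1\<^sub>m 2 - 1\<^sub>m 2 :: complex mat) = 2"
  unfolding kernel_dim_code by code_simp

lemma kd_rf: "kernel_dim (rf 0 - 1\<^sub>m 2) = 1" "kernel_dim (rf 2 - 1\<^sub>m 2) = 1" "kernel_dim (rf 4 - 1\<^sub>m 2) = 1"
  unfolding kernel_dim_code by code_simp+

lemma rf_G422: "k < 6 \<Longrightarrow> rf k \<in> G422"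
  unfolding G422_def units4_def
  by (drule six) (auto simp: r00_def r01_def r10_def)

lemma G422_cases:
  assumes A: "A \<in> G422" and d: "d2 (A - 1\<^sub>m 2) = 0"
  shows "A = 1\<^sub>m 2 \<or> A = rf 0 \<or> A = rf 1 \<or> A = rf 2 \<or> A = rf 3 \<or> A = rf 4 \<or> A = rf 5"
proof -
  have Ac: "A \<in> carrier_mat 2 2" using A unfolding G422_def by auto
  have d': "(A $$ (0,0) - 1) * (A $$ (1,1) - 1) - A $$ (0,1) * A $$ (1,0) = 0"
    using d Ac unfolding d2_def by simp
  from A have "(A $$ (0,1) = 0 \<and> A $$ (1,0) = 0 \<and> A $$ (0,0) \<in> units4 \<and> A $$ (1,1) \<in> units4
        \<and> A $$ (0,0) * A $$ (1,1) \<in> {1, -1})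
    \<or> (A $$ (0,0) = 0 \<and> A $$ (1,1) = 0 \<and> A $$ (0,1) \<in> units4 \<and> A $$ (1,0) \<in> units4
        \<and> A $$ (0,1) * A $$ (1,0) \<in> {1, -1})" unfolding G422_def by auto
  then show ?thesis
    unfolding mat2_eq_iff[OF Ac rf_carrier] mat2_eq_iff[OF Ac one_carrier_mat] units4_def
    using d'
    apply (simp only: insert_iff empty_iff simp_thms)
    apply (elim disjE conjE)
    apply (simp_all add: r00_def r01_def r10_def complex_eq_iff)
    done
qed

lemma refl_char:
  assumes "reflection422 A" shows "\<exists>k<6. A = rf k"
proof -
  have A: "A \<in> G422" and kd: "kernel_dim (A - 1\<^sub>m 2) = 1" using assms unfolding reflection422_def by auto
  have Ac: "A \<in> carrier_mat 2 2" using A unfolding G422_def by auto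
  have "d2 (A - 1\<^sub>m 2) = 0"
  proof (rule ccontr)
    assume "d2 (A - 1\<^sub>m 2) \<noteq> 0"
    from kd0[OF minus_carrier_mat[OF one_carrier_mat] this] kd show False by simp
  qed
  moreover have "A \<noteq> 1\<^sub>m 2" using kd kd_id by auto
  ultimately have "A \<in> rf ` {0,1,2,3,4,5}" using G422_cases[OF A] by auto
  then obtain k where "k \<in> {0,1,2,3,4,5}" "A = rf k" by auto
  then show ?thesis by (intro exI[of _ k]) auto
qed

lemma rf_refl: "reflection422 (rf 0)" "reflection422 (rf 2)" "reflection422 (rf 4)"
  unfolding reflection422_def using kd_rf rf_G422 by auto

lemma rf_sq: "k < 6 \<Longrightarrow> rf k * rf k = 1\<^sub>m 2"
  unfolding mat2_eq_iff[OF mult_carrier_mat[OF rf_carrier rf_carrier] one_carrier_mat]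
    mult_ent[OF rf_carrier rf_carrier] rf_ent one2_ent
  by (auto dest!: six simp: r00_def r01_def r10_def)

lemma minv_rf: "k < 6 \<Longrightarrow> minv (rf k) = rf k"
  using minv_eq[OF rf_carrier rf_carrier] rf_sq by auto

definition flip :: "nat \<Rightarrow> nat" where "flip k = (if even k then k+1 else k-1)"
definition cj :: "nat \<Rightarrow> nat \<Rightarrow> nat" where "cj a b = (if a div 2 = b div 2 then a else flip a)"

lemma hur: "a < 6 \<Longrightarrow> b < 6 \<Longrightarrow> minv (rf b) * rf a * rf b = rf (cj a b)"
  unfolding minv_rf
  unfolding mat2_eq_iff[OF mult_carrier_mat[OF mult_carrier_mat[OF rf_carrier rf_carrier] rf_carrier] rf_carrier]
    mult_ent[OF mult_carrier_mat[OF rf_carrier rf_carrier] rf_carrier] mult_ent[OF rf_carrier rf_carrier] rf_ent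
  apply (drule six, drule six)
  apply (elim disjE)
  apply (simp_all add: r00_def r01_def r10_def cj_def flip_def)
  done

lemma conj_rf:
  assumes g: "g \<in> G422" and a: "a < 6" and b: "b < 6" and r: "rf b = minv g * rf a * g"
  shows "a div 2 = b div 2"
proof -
  have gc: "g \<in> carrier_mat 2 2" using g unfolding G422_def by auto
  have "d2 g \<noteq> 0" using g unfolding G422_def d2_def units4_def by auto
  note I = inv2[OF gc this]
  have mg: "minv g = inv2 g" using minv_eq[OF gc inv2_carrier I] .
  have "g * rf b = (g * inv2 g) * rf a * g" unfolding r mg
    by (simp only: assoc_mult_mat[OF gc inv2_carrier rf_carrier]
        assoc_mult_mat[OF gc mult_carrier_mat[OF inv2_carrier rf_carrier] gc])
  also have "\<dots> = rf a * g" unfolding I using gc by simp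
  finally show ?thesis by (rule conj_class[OF g a b])
qed

lemma flip_div: "flip a div 2 = a div 2"
  unfolding flip_def by (cases "even a") (auto elim: evenE oddE)

lemma cj_div: "cj a b div 2 = a div 2"
  unfolding cj_def using flip_div by auto

lemma flip_lt: "a < 6 \<Longrightarrow> flip a < 6"
  unfolding flip_def by (drule six) auto

lemma cj_lt: "a < 6 \<Longrightarrow> cj a b < 6"
  unfolding cj_def using flip_lt by auto

lemma flip_flip: "a < 6 \<Longrightarrow> flip (flip a) = a"
  unfolding flip_def by (drule six) auto

lemma same_class: "a < 6 \<Longrightarrow> b < 6 \<Longrightarrow> a div 2 = b div 2 \<Longrightarrow> a \<noteq> b \<Longrightarrow> a = flip b"
  unfolding flip_def by (drule six, drule six) auto

definition hmk :: "nat \<Rightarrow> nat list \<Rightarrow> nat list" where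
  "hmk i ks = ks[i := ks ! Suc i, Suc i := cj (ks ! i) (ks ! Suc i)]"

definition hs :: "nat list \<Rightarrow> nat list \<Rightarrow> bool" where
  "hs ks ks' \<longleftrightarrow> (\<exists>i. Suc i < length ks \<and> ks' = hmk i ks)"

lemma hmk_len[simp]: "length (hmk i ks) = length ks"
  unfolding hmk_def by simp

lemma hs_len: "hs\<^sup>*\<^sup>* ks ks' \<Longrightarrow> length ks' = length ks"
  by (induction rule: rtranclp_induct) (auto simp: hs_def)

lemma ok_hmk: "\<forall>k\<in>set ks. k < 6 \<Longrightarrow> Suc i < length ks \<Longrightarrow> \<forall>k\<in>set (hmk i ks). k < 6"
  unfolding hmk_def
  by (intro ballI, drule set_update_subset_insert[THEN subsetD], auto dest!: set_update_subset_insert[THEN subsetD] intro: cj_lt)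

lemma map_hm:
  assumes "\<forall>k\<in>set ks. k < 6" "Suc i < length ks"
  shows "hurwitz_move i (map rf ks) = map rf (hmk i ks)"
proof -
  have "ks ! i < 6" "ks ! Suc i < 6" using assms by auto
  then show ?thesis
    unfolding hurwitz_move_def hmk_def using assms(2)
    by (simp add: map_update hur)
qed

lemma reach:
  assumes "hs\<^sup>*\<^sup>* ks ks'" "\<forall>k\<in>set ks. k < 6"
  shows "hurwitz_step\<^sup>*\<^sup>* (map rf ks) (map rf ks') \<and> (\<forall>k\<in>set ks'. k < 6)"
  using assms
proof (induction rule: rtranclp_induct)
  case base then show ?case by simp
next
  case (step y z)
  then obtain i where i: "Suc i < length y" "z = hmk i y" unfolding hs_def by auto
  have "hurwitz_step (map rf y) (map rf z)"
    unfolding hurwitz_step_def using i map_hm[of y i] step by auto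
  then show ?case using step i ok_hmk[of y i] by auto
qed

lemma move:
  assumes "i \<le> j" "j < length ks"
  shows "\<exists>ks'. hs\<^sup>*\<^sup>* ks ks' \<and> length ks' = length ks \<and> ks' ! j div 2 = ks ! i div 2
     \<and> (\<forall>p. j < p \<and> p < length ks \<longrightarrow> ks' ! p = ks ! p) \<and> (\<forall>p<i. ks' ! p = ks ! p)
     \<and> (\<forall>p. i \<le> p \<and> p < j \<longrightarrow> ks' ! p div 2 = ks ! Suc p div 2)"
  using assms
proof (induction j)
  case 0 then show ?case by (intro exI[of _ ks]) auto
next
  case (Suc j)
  show ?case
  proof (cases "i = Suc j")
    case True then show ?thesis by (intro exI[of _ ks]) auto
  next
    case False
    with Suc.prems have ij: "i \<le> j" by auto
    from Suc.IH[OF ij] Suc.prems obtain ks1 where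
      r1: "hs\<^sup>*\<^sup>* ks ks1" and l1: "length ks1 = length ks" and c1: "ks1 ! j div 2 = ks ! i div 2"
      and u1: "\<forall>p. j < p \<and> p < length ks \<longrightarrow> ks1 ! p = ks ! p" and v1: "\<forall>p<i. ks1 ! p = ks ! p"
      and w1: "\<forall>p. i \<le> p \<and> p < j \<longrightarrow> ks1 ! p div 2 = ks ! Suc p div 2" by auto
    define ks2 where "ks2 = hmk j ks1"
    have sj: "Suc j < length ks1" using l1 Suc.prems by simp
    have r2: "hs\<^sup>*\<^sup>* ks ks2" using r1 sj unfolding ks2_def
      by (metis (mono_tags, lifting) hs_def rtranclp.rtrancl_into_rtrancl)
    have e: "ks2 ! p = (if p = j then ks1 ! Suc j else if p = Suc j then cj (ks1 ! j) (ks1 ! Suc j) else ks1 ! p)"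
      if "p < length ks1" for p
      unfolding ks2_def hmk_def using that sj by (auto simp: nth_list_update)
    show ?thesis
    proof (intro exI[of _ ks2] conjI allI impI)
      show "hs\<^sup>*\<^sup>* ks ks2" by (rule r2)
      show "length ks2 = length ks" unfolding ks2_def using l1 by simp
      show "ks2 ! Suc j div 2 = ks ! i div 2" using e[of "Suc j"] sj c1 cj_div by simp
      fix p
      { assume "Suc j < p \<and> p < length ks" then show "ks2 ! p = ks ! p" using e[of p] u1 l1 by auto }
      { assume "p < i" then show "ks2 ! p = ks ! p" using e[of p] v1 l1 ij sj by auto }
      { assume "i \<le> p \<and> p < Suc j" then show "ks2 ! p div 2 = ks ! Suc p div 2"
          using e[of p] w1 u1 l1 sj by (cases "p = j") auto }
    qed
  qed
qed

lemma main_abs: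
  assumes ok: "\<forall>k\<in>set ks. k < 6" and cl: "\<forall>c<3. \<exists>k\<in>set ks. k div 2 = c" and x: "x < 6"
  shows "\<exists>ks'. hs\<^sup>*\<^sup>* ks ks' \<and> last ks' = x"
proof -
  define n where "n = length ks"
  have "x div 2 < 3" using x by simp
  then obtain k where "k \<in> set ks" "k div 2 = x div 2" using cl by blast
  then obtain i where i: "i < n" "ks ! i div 2 = x div 2"
    unfolding n_def in_set_conv_nth by blast
  define d where "d = (if x div 2 = 0 then 1 else 0::nat)"
  have "d < 3" "d \<noteq> x div 2" unfolding d_def by auto
  then obtain k' where "k' \<in> set ks" "k' div 2 = d" using cl by blast
  then obtain q where q: "q < n" "ks ! q div 2 = d"
    unfolding n_def in_set_conv_nth by blast
  have n1: "i \<le> n - 1" "n - 1 < length ks" using i unfolding n_def by auto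
  from move[OF n1] obtain ks1 where
    r1: "hs\<^sup>*\<^sup>* ks ks1" and l1: "length ks1 = n" and c1: "ks1 ! (n-1) div 2 = x div 2"
    and v1: "\<forall>p<i. ks1 ! p = ks ! p"
    and w1: "\<forall>p. i \<le> p \<and> p < n - 1 \<longrightarrow> ks1 ! p div 2 = ks ! Suc p div 2"
    using i unfolding n_def by auto
  obtain q' where q': "q' < n - 1" "ks1 ! q' div 2 = d"
  proof (cases "q < i")
    case True then show ?thesis using that[of q] v1 q i by auto
  next
    case False
    then have "q \<noteq> i" using q i \<open>d \<noteq> x div 2\<close> by auto
    with False have "i \<le> q - 1" "q - 1 < n - 1" "Suc (q - 1) = q" using q by auto
    then show ?thesis using that[of "q - 1"] w1 q by metis
  qed
  then have "n \<ge> 2" by simp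
  then obtain m where m: "n = Suc (Suc m)" using nat_le_iff_add[of 2 n] by auto
  have q'': "q' \<le> m" "m < length ks1" using q' m l1 by auto
  from move[OF q''] obtain ks2 where
    r2: "hs\<^sup>*\<^sup>* ks1 ks2" and l2: "length ks2 = n" and c2: "ks2 ! m div 2 = d"
    and u2: "\<forall>p. m < p \<and> p < length ks1 \<longrightarrow> ks2 ! p = ks1 ! p"
    using q' l1 by auto
  have last2: "ks2 ! Suc m div 2 = x div 2" using u2 c1 l1 m by auto
  have r12: "hs\<^sup>*\<^sup>* ks ks2" using r1 r2 by simp
  have ok2: "\<forall>k\<in>set ks2. k < 6" using reach[OF r12 ok] by simp
  have lt: "ks2 ! m < 6" "ks2 ! Suc m < 6" using ok2 l2 m by auto
  show ?thesis
  proof (cases "ks2 ! Suc m = x")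
    case True
    have "ks2 \<noteq> []" using l2 m by auto
    then show ?thesis using True r12 l2 m by (intro exI[of _ ks2]) (simp add: last_conv_nth)
  next
    case False
    have b: "ks2 ! Suc m = flip x" using same_class[OF lt(2) x] last2 False by simp
    define ks3 where "ks3 = hmk m ks2"
    define ks4 where "ks4 = hmk m ks3"
    have s2: "Suc m < length ks2" using l2 m by simp
    have l3: "length ks3 = n" "length ks4 = n" unfolding ks3_def ks4_def using l2 by auto
    have r4: "hs\<^sup>*\<^sup>* ks ks4"
    proof -
      have "hs ks2 ks3" unfolding hs_def ks3_def using s2 by auto
      moreover have "hs ks3 ks4" unfolding hs_def ks4_def using s2 l2 l3 by auto
      ultimately show ?thesis using r12 by (meson rtranclp.rtrancl_into_rtrancl)
    qed
    have e3: "ks3 ! m = ks2 ! Suc m" "ks3 ! Suc m = cj (ks2 ! m) (ks2 ! Suc m)"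
      unfolding ks3_def hmk_def using s2 by (auto simp: nth_list_update)
    have e4: "ks4 ! Suc m = cj (ks3 ! m) (ks3 ! Suc m)"
      unfolding ks4_def hmk_def using s2 l2 l3 by (auto simp: nth_list_update)
    have ne: "ks2 ! m div 2 \<noteq> ks2 ! Suc m div 2" using c2 last2 \<open>d \<noteq> x div 2\<close> by simp
    have "ks3 ! Suc m = flip (ks2 ! m)" using e3 ne unfolding cj_def by simp
    then have "ks4 ! Suc m = flip (ks2 ! Suc m)"
      using e4 e3 ne flip_div[of "ks2 ! m"] unfolding cj_def by simp
    then have "ks4 ! Suc m = x" using b flip_flip[OF x] by simp
    moreover have "ks4 \<noteq> []" using l3 m by auto
    ultimately show ?thesis using r4 l3 m by (intro exI[of _ ks4]) (simp add: last_conv_nth)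
  qed
qed

theorem proposition3p8:
  fixes T :: "complex mat list" and x :: "complex mat"
  assumes "\<forall>r\<in>set T. reflection422 r"
    and "length T \<ge> 3"
    and "\<forall>s. reflection422 s \<longrightarrow> (\<exists>r\<in>set T. conj422 s r)"
    and "reflection422 x"
  shows "\<exists>T'\<in>hurwitz_orbit T. last T' = x"
proof -
  define idx where "idx = (\<lambda>r. SOME k. k < 6 \<and> r = rf k)"
  have idx: "idx r < 6 \<and> r = rf (idx r)" if "reflection422 r" for r
    unfolding idx_def using someI_ex[OF refl_char[OF that]] by blast
  define ks where "ks = map idx T"
  have T: "map rf ks = T" unfolding ks_def using assms(1) idx by (simp add: map_idI)
  have ok: "\<forall>k\<in>set ks. k < 6" unfolding ks_def using assms(1) idx by auto
  have cl: "\<forall>c<3. \<exists>k\<in>set ks. k div 2 = c"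
  proof (intro allI impI)
    fix c :: nat assume c: "c < 3"
    have "c = 0 \<or> c = 1 \<or> c = 2" using c by auto
    then have rs: "reflection422 (rf (2 * c))" using rf_refl by (elim disjE) simp_all
    from assms(3) rs obtain r where r: "r \<in> set T" "conj422 (rf (2 * c)) r" by blast
    from r(2) obtain g where g: "g \<in> G422" "r = minv g * rf (2 * c) * g" unfolding conj422_def by blast
    have "idx r < 6" "r = rf (idx r)" using idx assms(1) r(1) by auto
    then have "(2 * c) div 2 = idx r div 2" using conj_rf[OF g(1) _ \<open>idx r < 6\<close>] g(2) c by simp
    moreover have "idx r \<in> set ks" unfolding ks_def using r(1) by simp
    ultimately show "\<exists>k\<in>set ks. k div 2 = c" by (metis nonzero_mult_div_cancel_left zero_neq_numeral)
  qed
  have xi: "idx x < 6" "x = rf (idx x)" using idx assms(4) by auto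
  from main_abs[OF ok cl xi(1)] obtain ks' where r: "hs\<^sup>*\<^sup>* ks ks'" "last ks' = idx x" by blast
  have l: "length ks' = length T" using hs_len[OF r(1)] T by auto
  then have ne: "ks' \<noteq> []" using assms(2) by auto
  have "map rf ks' \<in> hurwitz_orbit T"
    using reach[OF r(1) ok] T unfolding hurwitz_orbit_def by simp
  moreover have "last (map rf ks') = x" using ne r(2) xi by (simp add: last_map)
  ultimately show ?thesis by blast
qed

end
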